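(* The unitality, associativity and symmetry isomorphisms of the cartesian product on $E\mathcal M\text{-}\mathbf{SSet}$ restrict to isomorphisms for the box product $\boxtimes$ on $E\mathcal M\text{-}\mathbf{SSet}^\mu$ (e.g.\ $(X\times Y)\times Z\cong X\times(Y\times Z)$ restricts to an isomorphism $(X\boxtimes Y)\boxtimes Z\cong X\boxtimes(Y\boxtimes Z)$). This makes $E\mathcal M\text{-}\mathbf{SSet}^\mu$ a simplicial symmetric monoidal category with tensor product $\boxtimes$ and unit the terminal $E\mathcal M$-simplicial set.
   Context: $\omega=\{1,2,\dots\}$, $\mathcal M$ the monoid of injections $\omega\to\omega$, $\mathcal M_A$ those fixing $A\subset\omega$ pointwise; $A$ co-infinite if $\omega\setminus A$ is infinite. $E\mathcal M$ is the simplicial monoid with $(E\mathcal M)_n=\mathcal M^{1+n}$, pointwise multiplication, structure maps by precomposition. $E\mathcal M\text{-}\mathbf{SSet}$ is the category of simplicial sets with left $E\mathcal M$-action. $x\in X_n$ is $k$-supported on $A$ if $i_k(u).x=x$ for all $u\in\mathcal M_A$ ($i_k$ inclusion of the $(1+k)$-th factor). $X$ is mild if every $x\in X_n$ is, for each $0\le k\le n$, $k$-supported on some co-infinite set; $E\mathcal M\text{-}\mathbf{SSet}^\mu$ is the full subcategory of mild objects. The box product $X\boxtimes Y\subset X\times Y$ of mild $X,Y$ consists in degree $n$ of all $(x,y)$ such that for every $k$ there are disjoint $A_k,B_k\subset\omega$ with $A_k\cup B_k$ co-infinite, $x$ $k$-supported on $A_k$, $y$ $k$-supported on $B_k$; it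 is a mild $E\mathcal M$-simplicial subset of $X\times Y$ and functorial in $X,Y$. *)

theory Defs
  imports Main
begin

text \<open>The set omega = {1,2,...} is modelled by the type nat (a relabelling n |-> n+1);
  the monoid M of injections omega -> omega is {u :: nat => nat. inj u}.
  A simplicial set with E M action is given by
   - a carrier X :: nat => 'a set (X n = set of n-simplices),
   - simplicial operators sm m n f : X n -> X m for monotone f : [m] -> [n],
   - the action act n u : X n -> X n for u = (u 0, ..., u n) in M^(1+n).\<close>

definition simp_op :: "nat \<Rightarrow> nat \<Rightarrow> (nat \<Rightarrow> nat) \<Rightarrow> bool" where
  "simp_op m n f \<longleftrightarrow> (\<forall>i\<le>m. f i \<le> n) \<and> (\<forall>i j. i \<le> j \<longrightarrow> j \<le> m \<longrightarrow> f i \<le> f j)"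

definition EMtuple :: "nat \<Rightarrow> (nat \<Rightarrow> nat \<Rightarrow> nat) \<Rightarrow> bool" where
  "EMtuple n u \<longleftrightarrow> (\<forall>k\<le>n. inj (u k))"

definition em_sset ::
  "(nat \<Rightarrow> 'a set) \<Rightarrow> (nat \<Rightarrow> nat \<Rightarrow> (nat \<Rightarrow> nat) \<Rightarrow> 'a \<Rightarrow> 'a)
     \<Rightarrow> (nat \<Rightarrow> (nat \<Rightarrow> nat \<Rightarrow> nat) \<Rightarrow> 'a \<Rightarrow> 'a) \<Rightarrow> bool" where
  "em_sset X sm act \<longleftrightarrow>
     \<comment> \<open>simplicial set\<close>
     (\<forall>m n f x. simp_op m n f \<longrightarrow> x \<in> X n \<longrightarrow> sm m n f x \<in> X m) \<and>
     (\<forall>m n f g x. simp_op m n f \<longrightarrow> (\<forall>i\<le>m. f i = g i) \<longrightarrow> x \<in> X n \<longrightarrow> sm m n f x = sm m n g x) \<and>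
     (\<forall>n x. x \<in> X n \<longrightarrow> sm n n id x = x) \<and>
     (\<forall>k m n f g x. simp_op m n f \<longrightarrow> simp_op k m g \<longrightarrow> x \<in> X n \<longrightarrow>
         sm k m g (sm m n f x) = sm k n (f \<circ> g) x) \<and>
     \<comment> \<open>levelwise monoid action of M^(1+n), pointwise multiplication\<close>
     (\<forall>n u x. EMtuple n u \<longrightarrow> x \<in> X n \<longrightarrow> act n u x \<in> X n) \<and>
     (\<forall>n u v x. EMtuple n u \<longrightarrow> (\<forall>k\<le>n. u k = v k) \<longrightarrow> x \<in> X n \<longrightarrow> act n u x = act n v x) \<and>
     (\<forall>n x. x \<in> X n \<longrightarrow> act n (\<lambda>k. id) x = x) \<and>
     (\<forall>n u v x. EMtuple n u \<longrightarrow> EMtuple n v \<longrightarrow> x \<in> X n \<longrightarrow>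
         act n (\<lambda>k. u k \<circ> v k) x = act n u (act n v x)) \<and>
     \<comment> \<open>compatibility: structure maps of E M are precomposition\<close>
     (\<forall>m n f u x. simp_op m n f \<longrightarrow> EMtuple n u \<longrightarrow> x \<in> X n \<longrightarrow>
         sm m n f (act n u x) = act m (\<lambda>j. u (f j)) (sm m n f x))"

definition incl_k :: "nat \<Rightarrow> (nat \<Rightarrow> nat) \<Rightarrow> nat \<Rightarrow> nat \<Rightarrow> nat" where
  "incl_k k u = (\<lambda>j. if j = k then u else id)"

definition supported ::
  "(nat \<Rightarrow> (nat \<Rightarrow> nat \<Rightarrow> nat) \<Rightarrow> 'a \<Rightarrow> 'a) \<Rightarrow> nat \<Rightarrow> 'a \<Rightarrow> nat \<Rightarrow> nat set \<Rightarrow> bool" where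
  "supported act n x k A \<longleftrightarrow>
     (\<forall>u. inj u \<longrightarrow> (\<forall>a\<in>A. u a = a) \<longrightarrow> act n (incl_k k u) x = x)"

definition coinfinite :: "nat set \<Rightarrow> bool" where
  "coinfinite A \<longleftrightarrow> infinite (UNIV - A)"

definition mild :: "(nat \<Rightarrow> 'a set) \<Rightarrow> (nat \<Rightarrow> (nat \<Rightarrow> nat \<Rightarrow> nat) \<Rightarrow> 'a \<Rightarrow> 'a) \<Rightarrow> bool" where
  "mild X act \<longleftrightarrow> (\<forall>n. \<forall>x\<in>X n. \<forall>k\<le>n. \<exists>A. coinfinite A \<and> supported act n x k A)"

definition prod_sm ::
  "(nat \<Rightarrow> nat \<Rightarrow> (nat \<Rightarrow> nat) \<Rightarrow> 'a \<Rightarrow> 'a) \<Rightarrow> (nat \<Rightarrow> nat \<Rightarrow> (nat \<Rightarrow> nat) \<Rightarrow> 'b \<Rightarrow> 'b)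
     \<Rightarrow> nat \<Rightarrow> nat \<Rightarrow> (nat \<Rightarrow> nat) \<Rightarrow> 'a \<times> 'b \<Rightarrow> 'a \<times> 'b" where
  "prod_sm smX smY m n f p = (smX m n f (fst p), smY m n f (snd p))"

definition prod_act ::
  "(nat \<Rightarrow> (nat \<Rightarrow> nat \<Rightarrow> nat) \<Rightarrow> 'a \<Rightarrow> 'a) \<Rightarrow> (nat \<Rightarrow> (nat \<Rightarrow> nat \<Rightarrow> nat) \<Rightarrow> 'b \<Rightarrow> 'b)
     \<Rightarrow> nat \<Rightarrow> (nat \<Rightarrow> nat \<Rightarrow> nat) \<Rightarrow> 'a \<times> 'b \<Rightarrow> 'a \<times> 'b" where
  "prod_act actX actY n u p = (actX n u (fst p), actY n u (snd p))"

text \<open>Box product (as carrier; structure maps are those of the cartesian product).\<close>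
definition box ::
  "(nat \<Rightarrow> 'a set) \<Rightarrow> (nat \<Rightarrow> (nat \<Rightarrow> nat \<Rightarrow> nat) \<Rightarrow> 'a \<Rightarrow> 'a)
     \<Rightarrow> (nat \<Rightarrow> 'b set) \<Rightarrow> (nat \<Rightarrow> (nat \<Rightarrow> nat \<Rightarrow> nat) \<Rightarrow> 'b \<Rightarrow> 'b) \<Rightarrow> nat \<Rightarrow> ('a \<times> 'b) set" where
  "box X actX Y actY n = {(x, y). x \<in> X n \<and> y \<in> Y n \<and>
     (\<forall>k\<le>n. \<exists>A B. A \<inter> B = {} \<and> coinfinite (A \<union> B) \<and>
        supported actX n x k A \<and> supported actY n y k B)}"

definition term_X :: "nat \<Rightarrow> unit set" where "term_X n = {()}"
definition term_sm :: "nat \<Rightarrow> nat \<Rightarrow> (nat \<Rightarrow> nat) \<Rightarrow> unit \<Rightarrow> unit" where "term_sm m n f x = ()"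
definition term_act :: "nat \<Rightarrow> (nat \<Rightarrow> nat \<Rightarrow> nat) \<Rightarrow> unit \<Rightarrow> unit" where "term_act n u x = ()"

end

theory Submission
  imports Defs "HOL-Library.Infinite_Set"
begin

lemma em_act_in: "em_sset X sm act \<Longrightarrow> EMtuple n u \<Longrightarrow> x \<in> X n \<Longrightarrow> act n u x \<in> X n"
  unfolding em_sset_def by blast
lemma em_act_comp: "em_sset X sm act \<Longrightarrow> EMtuple n u \<Longrightarrow> EMtuple n v \<Longrightarrow> x \<in> X n \<Longrightarrow>
    act n (\<lambda>k. u k \<circ> v k) x = act n u (act n v x)"
  unfolding em_sset_def by blast
lemma em_act_id: "em_sset X sm act \<Longrightarrow> x \<in> X n \<Longrightarrow> act n (\<lambda>k. id) x = x"
  unfolding em_sset_def by blast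
lemma em_compat: "em_sset X sm act \<Longrightarrow> simp_op m n f \<Longrightarrow> EMtuple n u \<Longrightarrow> x \<in> X n \<Longrightarrow>
         sm m n f (act n u x) = act m (\<lambda>j. u (f j)) (sm m n f x)"
  unfolding em_sset_def by blast
lemma em_sm_in: "em_sset X sm act \<Longrightarrow> simp_op m n f \<Longrightarrow> x \<in> X n \<Longrightarrow> sm m n f x \<in> X m"
  unfolding em_sset_def by (elim conjE) (rule, blast+)

lemma EM_incl: "inj u \<Longrightarrow> EMtuple n (incl_k k u)"
  by (simp add: EMtuple_def incl_k_def)

lemma incl_comp: "incl_k k (u \<circ> v) = (\<lambda>j. incl_k k u j \<circ> incl_k k v j)"
  by (auto simp: incl_k_def fun_eq_iff)

lemma act_incl_comp:
  assumes "em_sset X sm act" "x \<in> X n" "inj u" "inj v"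
  shows "act n (incl_k k (u \<circ> v)) x = act n (incl_k k u) (act n (incl_k k v) x)"
  using em_act_comp[OF assms(1) EM_incl[OF assms(3)] EM_incl[OF assms(4)] assms(2)]
  by (simp add: incl_comp)

lemma inj_piece:
  fixes R :: "nat set"
  assumes "inj_on f A" "infinite R" "f ` A \<inter> R = {}"
  shows "inj (\<lambda>i. if i \<in> A then f i else enumerate R i)"
proof (rule injI)
  have e: "inj (enumerate R)" using inj_enumerate[OF assms(2)] .
  have r: "\<And>i. enumerate R i \<in> R" using enumerate_in_set[OF assms(2)] .
  fix x y assume h: "(if x \<in> A then f x else enumerate R x) = (if y \<in> A then f y else enumerate R y)"
  show "x = y"
  proof (cases "x \<in> A")
    case xA: True
    show ?thesis
    proof (cases "y \<in> A")
      case True then show ?thesis using xA h assms(1) by (simp add: inj_on_def)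
    next
      case False
      then have "f x = enumerate R y" using xA h by simp
      then have "f x \<in> f ` A \<inter> R" using xA r[of y] by (metis IntI imageI)
      then show ?thesis using assms(3) by simp
    qed
  next
    case xA: False
    show ?thesis
    proof (cases "y \<in> A")
      case True
      then have "f y = enumerate R x" using xA h by simp
      then have "f y \<in> f ` A \<inter> R" using True r[of x] by (metis IntI imageI)
      then show ?thesis using assms(3) by simp
    next
      case False then show ?thesis using xA h e by (simp add: inj_eq)
    qed
  qed
qed

lemma infinite_split:
  fixes S :: "nat set"
  assumes "infinite S"
  shows "\<exists>P\<subseteq>S. infinite P \<and> infinite (S - P)"
proof -
  let ?E = "enumerate S"
  have e: "inj ?E" using inj_enumerate[OF assms] .
  have r: "\<And>i. ?E i \<in> S" using enumerate_in_set[OF assms] .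
  let ?P = "?E ` {i. even i}"
  have i1: "infinite {i::nat. even i}"
  proof -
    have "range (\<lambda>i::nat. 2*i) \<subseteq> {i. even i}" by auto
    moreover have "inj (\<lambda>i::nat. 2*i)" by (auto simp: inj_on_def)
    ultimately show ?thesis using range_inj_infinite finite_subset by blast
  qed
  have i2: "infinite {i::nat. odd i}"
  proof -
    have "range (\<lambda>i::nat. 2*i+1) \<subseteq> {i. odd i}" by auto
    moreover have "inj (\<lambda>i::nat. 2*i+1)" by (auto simp: inj_on_def)
    ultimately show ?thesis using range_inj_infinite finite_subset by blast
  qed
  have "infinite ?P" using i1 e by (metis finite_imageD inj_on_subset subset_UNIV)
  moreover have "?E ` {i. odd i} \<subseteq> S - ?P" using e r by (auto simp: inj_on_def)
  moreover have "infinite (?E ` {i. odd i})" using i2 e by (metis finite_imageD inj_on_subset subset_UNIV)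
  ultimately show ?thesis using r by (intro exI[of _ ?P]) (auto dest: finite_subset)
qed


lemma coinf_inf: "coinfinite A \<Longrightarrow> infinite (- A)"
  by (simp add: coinfinite_def Compl_eq_Diff_UNIV)

lemma inf_image_compl:
  fixes g :: "nat \<Rightarrow> nat"
  assumes "inj g" "infinite (- A)"
  shows "infinite (- (g ` A))"
proof -
  have "g ` (- A) \<subseteq> - (g ` A)" using assms(1) by (auto simp: inj_on_def)
  moreover have "infinite (g ` (- A))"
  proof
    assume "finite (g ` (- A))"
    moreover have "inj_on g (- A)" using assms(1) by (simp add: inj_on_def)
    ultimately have "finite (- A)" by (rule finite_imageD)
    then show False using assms(2) by simp
  qed
  ultimately show ?thesis by (meson finite_subset)
qed

lemma ex_bij_ext:
  fixes g :: "nat \<Rightarrow> nat"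
  assumes "coinfinite A" "inj g"
  shows "\<exists>\<sigma>. bij \<sigma> \<and> (\<forall>i\<in>A. \<sigma> i = g i)"
proof -
  have iB: "infinite (- A)" using coinf_inf[OF assms(1)] .
  have iC: "infinite (- (g ` A))" using inf_image_compl[OF assms(2) iB] .
  have b1: "bij_betw (enumerate (- A)) UNIV (- A)" using bij_enumerate[OF iB] .
  have b2: "bij_betw (enumerate (- (g ` A))) UNIV (- (g ` A))" using bij_enumerate[OF iC] .
  let ?t = "enumerate (- (g ` A)) \<circ> the_inv_into UNIV (enumerate (- A))"
  have bt: "bij_betw ?t (- A) (- (g ` A))"
    using bij_betw_trans[OF bij_betw_the_inv_into[OF b1] b2] .
  have bg: "bij_betw g A (g ` A)" using inj_on_imp_bij_betw[OF inj_on_subset[OF assms(2)]] by blast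
  have "bij_betw (\<lambda>x. if x \<in> A then g x else ?t x) (A \<union> - A) (g ` A \<union> - (g ` A))"
    by (rule bij_betw_disjoint_Un[OF bg bt]) blast+
  moreover have "A \<union> - A = UNIV" "g ` A \<union> - (g ` A) = UNIV" by auto
  ultimately have "bij (\<lambda>x. if x \<in> A then g x else ?t x)" by metis
  then show ?thesis by (intro exI[of _ "\<lambda>x. if x \<in> A then g x else ?t x"]) auto
qed

lemma AG:
  assumes em: "em_sset X sm act" and x: "x \<in> X n" and sup: "supported act n x k A"
    and ci: "coinfinite A" and g: "inj g" and h: "inj h" and eq: "\<forall>i\<in>A. g i = h i"
  shows "act n (incl_k k g) x = act n (incl_k k h) x"
proof -
  obtain \<sigma> where bs: "bij \<sigma>" and sg: "\<forall>i\<in>A. \<sigma> i = g i" using ex_bij_ext[OF ci g] by blast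
  have key: "act n (incl_k k f) x = act n (incl_k k \<sigma>) x" if f: "inj f" "\<forall>i\<in>A. \<sigma> i = f i" for f
  proof -
    have fe: "f = \<sigma> \<circ> (inv \<sigma> \<circ> f)" using bs by (simp add: fun_eq_iff surj_f_inv_f bij_is_surj)
    have si: "inj \<sigma>" using bs bij_is_inj by blast
    have ij: "inj (inv \<sigma> \<circ> f)" by (rule inj_compose[OF bij_is_inj[OF bij_imp_bij_inv[OF bs]] f(1)])
    have fx: "\<forall>i\<in>A. (inv \<sigma> \<circ> f) i = i" using f(2) inv_f_f[OF si] by (metis comp_apply)
    have "act n (incl_k k f) x = act n (incl_k k (\<sigma> \<circ> (inv \<sigma> \<circ> f))) x" using fe by simp
    also have "\<dots> = act n (incl_k k \<sigma>) (act n (incl_k k (inv \<sigma> \<circ> f)) x)"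
      by (rule act_incl_comp[OF em x si ij])
    also have "act n (incl_k k (inv \<sigma> \<circ> f)) x = x" using sup ij fx unfolding supported_def by blast
    finally show ?thesis .
  qed
  have "\<forall>i\<in>A. \<sigma> i = h i" using sg eq by simp
  from key[OF h this] key[OF g sg] show ?thesis by simp
qed

lemma transfer_sup:
  assumes em: "em_sset X sm act" and x: "x \<in> X n" and u: "EMtuple n u" and k: "k \<le> n"
    and sup: "supported act n x k A" and ci: "coinfinite A"
  shows "supported act n (act n u x) k (u k ` A)"
  unfolding supported_def
proof (intro allI impI)
  fix v :: "nat \<Rightarrow> nat" assume v: "inj v" and fv: "\<forall>a\<in>u k ` A. v a = a"
  have uk: "inj (u k)" using u k by (simp add: EMtuple_def)
  define u' where "u' = (\<lambda>j. if j = k then id else u j)"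
  have eu': "EMtuple n u'" using u by (simp add: EMtuple_def u'_def)
  have ivu: "inj (v \<circ> u k)" using v uk by (rule inj_compose)
  have "act n (incl_k k v) (act n u x) = act n (\<lambda>j. incl_k k v j \<circ> u j) x"
    using em_act_comp[OF em EM_incl[OF v] u x] by simp
  also have "(\<lambda>j. incl_k k v j \<circ> u j) = (\<lambda>j. u' j \<circ> incl_k k (v \<circ> u k) j)"
    by (auto simp: fun_eq_iff incl_k_def u'_def)
  also have "act n \<dots> x = act n u' (act n (incl_k k (v \<circ> u k)) x)"
    using em_act_comp[OF em eu' EM_incl[OF ivu] x] .
  also have "act n (incl_k k (v \<circ> u k)) x = act n (incl_k k (u k)) x"
    using AG[OF em x sup ci ivu uk] fv by simp
  also have "act n u' (act n (incl_k k (u k)) x) = act n (\<lambda>j. u' j \<circ> incl_k k (u k) j) x"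
    using em_act_comp[OF em eu' EM_incl[OF uk] x] by simp
  also have "(\<lambda>j. u' j \<circ> incl_k k (u k) j) = u"
    by (auto simp: fun_eq_iff incl_k_def u'_def)
  finally show "act n (incl_k k v) (act n u x) = act n u x" .
qed

lemma choose_Q:
  fixes W A :: "nat set"
  assumes "infinite W" "coinfinite A"
  shows "\<exists>Q\<subseteq>W. infinite Q \<and> infinite (- A - Q)"
proof (cases "infinite (W \<inter> A)")
  case True
  have "- A - (W \<inter> A) = - A" by auto
  then show ?thesis using True coinf_inf[OF assms(2)] by (intro exI[of _ "W \<inter> A"]) auto
next
  case False
  have "W = (W \<inter> A) \<union> (W - A)" by auto
  then have "infinite (W - A)" using False assms(1) by (metis finite_Un)
  then obtain P where P: "P \<subseteq> W - A" "infinite P" "infinite (W - A - P)"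
    using infinite_split by blast
  have "W - A - P \<subseteq> - A - P" by auto
  then have "infinite (- A - P)" using P(3) by (meson finite_subset)
  then show ?thesis using P by (intro exI[of _ P]) auto
qed

lemma sup_Int:
  assumes em: "em_sset X sm act" and x: "x \<in> X n"
    and sA: "supported act n x k A" and sD: "supported act n x k D"
    and cA: "coinfinite A" and cD: "coinfinite D"
  shows "supported act n x k (A \<inter> D)"
  unfolding supported_def
proof (intro allI impI)
  fix u :: "nat \<Rightarrow> nat" assume u: "inj u" and fu: "\<forall>a\<in>A \<inter> D. u a = a"
  have iW: "infinite (- (u ` D))" using inf_image_compl[OF u coinf_inf[OF cD]] .
  obtain Q where Q: "Q \<subseteq> - (u ` D)" "infinite Q" "infinite (- A - Q)"
    using choose_Q[OF iW cA] by blast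
  define u' where "u' = (\<lambda>i. if i \<in> D then u i else enumerate Q i)"
  have iu': "inj u'" unfolding u'_def
    by (rule inj_piece) (use u Q in \<open>auto simp: inj_on_def\<close>)
  have eQ: "\<And>i. enumerate Q i \<in> Q" using enumerate_in_set[OF Q(2)] .
  have s1: "act n (incl_k k u) x = act n (incl_k k u') x"
    by (rule AG[OF em x sD cD u iu']) (simp add: u'_def)
  define R where "R = - (A \<union> u' ` A)"
  have "- A - Q \<subseteq> R"
  proof
    fix y assume y: "y \<in> - A - Q"
    have "y \<notin> u' ` A"
    proof
      assume "y \<in> u' ` A"
      then obtain i where i: "i \<in> A" "y = u' i" by blast
      show False
      proof (cases "i \<in> D")
        case True then have "y = i" using i fu by (simp add: u'_def)
        then show False using y i by simp
      next
        case False then have "y = enumerate Q i" using i by (simp add: u'_def)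
        then show False using y eQ by simp
      qed
    qed
    then show "y \<in> R" using y by (simp add: R_def)
  qed
  then have iR: "infinite R" using Q(3) by (meson finite_subset)
  have eR: "\<And>i. enumerate R i \<in> R" using enumerate_in_set[OF iR] .
  define t where "t = (\<lambda>i. if i \<in> A then u' i else enumerate R i)"
  have it: "inj t" unfolding t_def
    by (rule inj_piece) (use iu' iR in \<open>auto simp: inj_on_def R_def\<close>)
  have s2: "act n (incl_k k u') x = act n (incl_k k t) x"
    by (rule AG[OF em x sA cA iu' it]) (simp add: t_def)
  define s where "s = (\<lambda>i. if i \<in> A then id i else enumerate R i)"
  have is': "inj s" unfolding s_def
    by (rule inj_piece) (use iR in \<open>auto simp: R_def\<close>)
  have s3: "act n (incl_k k t) x = act n (incl_k k s) x"
    by (rule AG[OF em x sD cD it is']) (use fu in \<open>auto simp: t_def s_def u'_def\<close>)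
  have s4: "act n (incl_k k s) x = x"
    using sA is' unfolding supported_def by (auto simp: s_def)
  show "act n (incl_k k u) x = x" using s1 s2 s3 s4 by simp
qed

lemma diag_sup:
  assumes em: "em_sset X sm act" and z: "z \<in> X m" and Pk: "P k" and cA: "coinfinite A"
    and dfix: "\<And>w. inj w \<Longrightarrow> (\<forall>i\<in>A. w i = i) \<Longrightarrow> act m (\<lambda>j. if P j then w else id) z = z"
  shows "supported act m z k A"
proof -
  have Ed: "EMtuple m (\<lambda>j. if P j then w else id)" if "inj w" for w
    using that by (simp add: EMtuple_def)
  have C: "act m (incl_k k u) z = z"
    if u: "inj u" and fu: "\<forall>i\<in>A. u i = i" and iR: "infinite (- range u)" for u
  proof -
    define a where "a = (\<lambda>i. if i \<in> range u then u i else i)"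
    have ia: "inj a"
    proof (rule injI)
      fix x y assume h: "a x = a y"
      show "x = y"
      proof (cases "x \<in> range u")
        case xin: True
        show ?thesis
        proof (cases "y \<in> range u")
          case True then show ?thesis using xin h u by (simp add: a_def inj_eq)
        next
          case False then show ?thesis using xin h by (simp add: a_def; metis rangeI)
        qed
      next
        case xout: False
        show ?thesis
        proof (cases "y \<in> range u")
          case True then show ?thesis using xout h by (simp add: a_def; metis rangeI)
        next
          case False then show ?thesis using xout h by (simp add: a_def)
        qed
      qed
    qed
    have au: "a \<circ> u = u \<circ> u" by (simp add: a_def fun_eq_iff)
    have Ar: "A \<subseteq> range u" using fu by (metis rangeI subsetI)
    define w' where "w' = (\<lambda>i. if i \<in> A then id i else enumerate (- range u) i)"
    have eR: "\<And>i. enumerate (- range u) i \<in> - range u" using enumerate_in_set[OF iR] .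
    have iw: "inj w'" unfolding w'_def
      by (rule inj_piece) (use iR Ar in auto)
    have fw: "\<forall>i\<in>A. w' i = i" by (simp add: w'_def)
    have aw: "a \<circ> w' = w'"
    proof
      fix i show "(a \<circ> w') i = w' i"
      proof (cases "i \<in> A")
        case True then show ?thesis using fu by (simp add: a_def w'_def)
      next
        case False then show ?thesis using eR[of i] by (auto simp: a_def w'_def)
      qed
    qed
    have e1: "act m (incl_k k u) z = act m (\<lambda>j. incl_k k u j \<circ> (if P j then u else id)) z"
      using em_act_comp[OF em EM_incl[OF u] Ed[OF u] z] dfix[OF u fu] by simp
    have e2: "(\<lambda>j. incl_k k u j \<circ> (if P j then u else id)) = (\<lambda>j. incl_k k a j \<circ> (if P j then u else id))"
      using au Pk by (intro ext) (simp add: incl_k_def fun_eq_iff)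
    have e3: "act m (\<lambda>j. incl_k k a j \<circ> (if P j then u else id)) z = act m (incl_k k a) z"
      using em_act_comp[OF em EM_incl[OF ia] Ed[OF u] z] dfix[OF u fu] by simp
    have e4: "act m (incl_k k a) z = act m (\<lambda>j. incl_k k a j \<circ> (if P j then w' else id)) z"
      using em_act_comp[OF em EM_incl[OF ia] Ed[OF iw] z] dfix[OF iw fw] by simp
    have e5: "(\<lambda>j. incl_k k a j \<circ> (if P j then w' else id)) = (\<lambda>j. if P j then w' else id)"
      using aw Pk by (intro ext) (simp add: incl_k_def fun_eq_iff)
    show ?thesis using e1 e2 e3 e4 e5 dfix[OF iw fw] by simp
  qed
  show ?thesis unfolding supported_def
  proof (intro allI impI)
    fix u :: "nat \<Rightarrow> nat" assume u: "inj u" and fu: "\<forall>i\<in>A. u i = i"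
    obtain P' where P': "P' \<subseteq> - A" "infinite P'" "infinite (- A - P')"
      using infinite_split[OF coinf_inf[OF cA]] by blast
    define v where "v = (\<lambda>i. if i \<in> A then id i else enumerate P' i)"
    have eP: "\<And>i. enumerate P' i \<in> P'" using enumerate_in_set[OF P'(2)] .
    have iv: "inj v" unfolding v_def by (rule inj_piece) (use P' in \<open>auto simp: inj_on_def\<close>)
    have fv: "\<forall>i\<in>A. v i = i" by (simp add: v_def)
    have sub: "- A - P' \<subseteq> - range v"
    proof
      fix y assume y: "y \<in> - A - P'"
      show "y \<in> - range v"
      proof
        assume "y \<in> range v"
        then obtain i where i: "y = v i" by blast
        show False
        proof (cases "i \<in> A")
          case True then show False using y i by (simp add: v_def)
        next
          case False then show False using y i eP[of i] by (simp add: v_def)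
        qed
      qed
    qed
    have iRv: "infinite (- range v)" using P'(3) sub by (meson finite_subset)
    have iuv: "inj (u \<circ> v)" using u iv by (rule inj_compose)
    have fuv: "\<forall>i\<in>A. (u \<circ> v) i = i" using fu fv by simp
    have "u ` (- range v) \<subseteq> - range (u \<circ> v)"
    proof
      fix y assume "y \<in> u ` (- range v)"
      then obtain b where b: "b \<notin> range v" "y = u b" by blast
      show "y \<in> - range (u \<circ> v)"
      proof
        assume "y \<in> range (u \<circ> v)"
        then obtain c where "y = u (v c)" by auto
        then have "b = v c" using b u by (simp add: inj_eq)
        then show False using b by simp
      qed
    qed
    moreover have "infinite (u ` (- range v))"
    proof
      assume "finite (u ` (- range v))"
      moreover have "inj_on u (- range v)" using u by (simp add: inj_on_def)
      ultimately have "finite (- range v)" by (rule finite_imageD)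
      then show False using iRv by simp
    qed
    ultimately have iRuv: "infinite (- range (u \<circ> v))" by (meson finite_subset)
    have "act m (incl_k k u) z = act m (incl_k k u) (act m (incl_k k v) z)"
      using C[OF iv fv iRv] by simp
    also have "\<dots> = act m (incl_k k (u \<circ> v)) z"
      using act_incl_comp[OF em z u iv] by simp
    also have "\<dots> = z" using C[OF iuv fuv iRuv] .
    finally show "act m (incl_k k u) z = z" .
  qed
qed

lemma em_sm_cong:
  assumes em: "em_sset X sm act" and h: "simp_op m n f" "\<forall>i\<le>m. f i = g i" "x \<in> X n"
  shows "sm m n f x = sm m n g x"
proof -
  from em have "\<forall>m n f g x. simp_op m n f \<longrightarrow> (\<forall>i\<le>m. f i = g i) \<longrightarrow> x \<in> X n \<longrightarrow> sm m n f x = sm m n g x"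
    unfolding em_sset_def by (elim conjE) assumption
  then show ?thesis using h by blast
qed
lemma em_sm_id:
  assumes em: "em_sset X sm act" and h: "x \<in> X n"
  shows "sm n n id x = x"
proof -
  from em have "\<forall>n x. x \<in> X n \<longrightarrow> sm n n id x = x"
    unfolding em_sset_def by (elim conjE) assumption
  then show ?thesis using h by blast
qed
lemma em_sm_comp:
  assumes em: "em_sset X sm act" and h: "simp_op m n f" "simp_op k m g" "x \<in> X n"
  shows "sm k m g (sm m n f x) = sm k n (f \<circ> g) x"
proof -
  from em have "\<forall>k m n f g x. simp_op m n f \<longrightarrow> simp_op k m g \<longrightarrow> x \<in> X n \<longrightarrow>
         sm k m g (sm m n f x) = sm k n (f \<circ> g) x"
    unfolding em_sset_def by (elim conjE) assumption
  then show ?thesis using h by blast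
qed
lemma em_act_cong:
  assumes em: "em_sset X sm act" and h: "EMtuple n u" "\<forall>k\<le>n. u k = v k" "x \<in> X n"
  shows "act n u x = act n v x"
proof -
  from em have "\<forall>n u v x. EMtuple n u \<longrightarrow> (\<forall>k\<le>n. u k = v k) \<longrightarrow> x \<in> X n \<longrightarrow> act n u x = act n v x"
    unfolding em_sset_def by (elim conjE) assumption
  then show ?thesis using h by blast
qed

lemma sup_mono: "supported act n x k A \<Longrightarrow> A \<subseteq> B \<Longrightarrow> supported act n x k B"
  unfolding supported_def by blast

lemma coinf_mono: "coinfinite B \<Longrightarrow> A \<subseteq> B \<Longrightarrow> coinfinite A"
  unfolding coinfinite_def by (meson Diff_mono finite_subset order_refl)

lemma sup_prod: "supported (prod_act aX aY) n p k A \<longleftrightarrow>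
    supported aX n (fst p) k A \<and> supported aY n (snd p) k A"
  unfolding supported_def prod_act_def by (auto simp: prod_eq_iff)

lemma mem_box: "p \<in> box X aX Y aY n \<Longrightarrow> fst p \<in> X n \<and> snd p \<in> Y n"
  unfolding box_def by auto

lemma coinf_image:
  fixes g :: "nat \<Rightarrow> nat"
  assumes "inj g" "coinfinite S" shows "coinfinite (g ` S)"
  using inf_image_compl[OF assms(1) coinf_inf[OF assms(2)]]
  by (simp add: coinfinite_def Compl_eq_Diff_UNIV)

lemma box_sm:
  assumes emX: "em_sset X smX aX" and emY: "em_sset Y smY aY"
    and p: "(x, y) \<in> box X aX Y aY n" and f: "simp_op m n f"
  shows "prod_sm smX smY m n f (x, y) \<in> box X aX Y aY m"
proof -
  have x: "x \<in> X n" and y: "y \<in> Y n" using p by (auto simp: box_def)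
  have H: "\<forall>k\<le>n. \<exists>A B. A \<inter> B = {} \<and> coinfinite (A \<union> B) \<and>
        supported aX n x k A \<and> supported aY n y k B" using p by (simp add: box_def)
  have gen: "supported act m (sm m n f z) k A"
    if em: "em_sset Z sm act" and z: "z \<in> Z n" and s: "supported act n z (f k) A"
      and c: "coinfinite A" for Z sm act z k A
  proof (rule diag_sup[OF em em_sm_in[OF em f z], of "\<lambda>j. f j = f k"])
    show "f k = f k" ..
    show "coinfinite A" by fact
    fix w :: "nat \<Rightarrow> nat" assume w: "inj w" and fw: "\<forall>i\<in>A. w i = i"
    have "act m (\<lambda>j. if f j = f k then w else id) (sm m n f z) = act m (\<lambda>j. incl_k (f k) w (f j)) (sm m n f z)"
      by (simp add: incl_k_def)
    also have "\<dots> = sm m n f (act n (incl_k (f k) w) z)"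
      using em_compat[OF em f EM_incl[OF w] z] by simp
    also have "act n (incl_k (f k) w) z = z" using s w fw unfolding supported_def by blast
    finally show "act m (\<lambda>j. if f j = f k then w else id) (sm m n f z) = sm m n f z" .
  qed
  have "\<forall>k\<le>m. \<exists>A B. A \<inter> B = {} \<and> coinfinite (A \<union> B) \<and>
        supported aX m (smX m n f x) k A \<and> supported aY m (smY m n f y) k B"
  proof (intro allI impI)
    fix k assume "k \<le> m"
    then have "f k \<le> n" using f by (simp add: simp_op_def)
    then obtain A B where AB: "A \<inter> B = {}" "coinfinite (A \<union> B)"
      "supported aX n x (f k) A" "supported aY n y (f k) B" using H by blast
    have cA: "coinfinite A" "coinfinite B" using AB(2) coinf_mono by blast+
    show "\<exists>A B. A \<inter> B = {} \<and> coinfinite (A \<union> B) \<and>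
        supported aX m (smX m n f x) k A \<and> supported aY m (smY m n f y) k B"
      using AB(1,2) gen[OF emX x AB(3) cA(1)] gen[OF emY y AB(4) cA(2)] by blast
  qed
  then show ?thesis
    using em_sm_in[OF emX f x] em_sm_in[OF emY f y] by (simp add: box_def prod_sm_def)
qed

lemma box_act:
  assumes emX: "em_sset X smX aX" and emY: "em_sset Y smY aY"
    and p: "(x, y) \<in> box X aX Y aY n" and u: "EMtuple n u"
  shows "prod_act aX aY n u (x, y) \<in> box X aX Y aY n"
proof -
  have x: "x \<in> X n" and y: "y \<in> Y n" using p by (auto simp: box_def)
  have H: "\<forall>k\<le>n. \<exists>A B. A \<inter> B = {} \<and> coinfinite (A \<union> B) \<and>
        supported aX n x k A \<and> supported aY n y k B" using p by (simp add: box_def)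
  have "\<forall>k\<le>n. \<exists>A B. A \<inter> B = {} \<and> coinfinite (A \<union> B) \<and>
        supported aX n (aX n u x) k A \<and> supported aY n (aY n u y) k B"
  proof (intro allI impI)
    fix k assume k: "k \<le> n"
    then obtain A B where AB: "A \<inter> B = {}" "coinfinite (A \<union> B)"
      "supported aX n x k A" "supported aY n y k B" using H by blast
    have cA: "coinfinite A" "coinfinite B" using AB(2) coinf_mono by blast+
    have uk: "inj (u k)" using u k by (simp add: EMtuple_def)
    have "u k ` A \<inter> u k ` B = {}" using AB(1) uk by (simp add: image_Int[symmetric])
    moreover have "coinfinite (u k ` A \<union> u k ` B)"
      using coinf_image[OF uk AB(2)] by (simp add: image_Un)
    ultimately show "\<exists>A B. A \<inter> B = {} \<and> coinfinite (A \<union> B) \<and>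
        supported aX n (aX n u x) k A \<and> supported aY n (aY n u y) k B"
      using transfer_sup[OF emX x u k AB(3) cA(1)] transfer_sup[OF emY y u k AB(4) cA(2)] by blast
  qed
  then show ?thesis
    using em_act_in[OF emX u x] em_act_in[OF emY u y] by (simp add: box_def prod_act_def)
qed

lemma em_box:
  assumes emX: "em_sset X smX aX" and emY: "em_sset Y smY aY"
  shows "em_sset (box X aX Y aY) (prod_sm smX smY) (prod_act aX aY)"
  unfolding em_sset_def
proof (intro conjI allI impI)
  fix m n f p assume "simp_op m n f" "p \<in> box X aX Y aY n"
  then show "prod_sm smX smY m n f p \<in> box X aX Y aY m"
    using box_sm[OF emX emY, of "fst p" "snd p"] by simp
next
  fix m n f g p assume "simp_op m n f" "\<forall>i\<le>m. f i = g i" "p \<in> box X aX Y aY n"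
  then show "prod_sm smX smY m n f p = prod_sm smX smY m n g p"
    using mem_box[of p] em_sm_cong[OF emX, of m n f g "fst p"] em_sm_cong[OF emY, of m n f g "snd p"]
    by (simp add: prod_sm_def)
next
  fix n p assume "p \<in> box X aX Y aY n"
  then show "prod_sm smX smY n n id p = p"
    using mem_box[of p] em_sm_id[OF emX, of "fst p"] em_sm_id[OF emY, of "snd p"] by (simp add: prod_sm_def)
next
  fix k m n f g p assume "simp_op m n f" "simp_op k m g" "p \<in> box X aX Y aY n"
  then show "prod_sm smX smY k m g (prod_sm smX smY m n f p) = prod_sm smX smY k n (f \<circ> g) p"
    using mem_box[of p] em_sm_comp[OF emX, of m n f k g "fst p"] em_sm_comp[OF emY, of m n f k g "snd p"]
    by (simp add: prod_sm_def)
next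
  fix n u p assume "EMtuple n u" "p \<in> box X aX Y aY n"
  then show "prod_act aX aY n u p \<in> box X aX Y aY n"
    using box_act[OF emX emY, of "fst p" "snd p"] by simp
next
  fix n u v p assume "EMtuple n u" "\<forall>k\<le>n. u k = v k" "p \<in> box X aX Y aY n"
  then show "prod_act aX aY n u p = prod_act aX aY n v p"
    using mem_box[of p] em_act_cong[OF emX, of n u v "fst p"] em_act_cong[OF emY, of n u v "snd p"]
    by (simp add: prod_act_def)
next
  fix n p assume "p \<in> box X aX Y aY n"
  then show "prod_act aX aY n (\<lambda>k. id) p = p"
    using mem_box[of p] em_act_id[OF emX, of "fst p"] em_act_id[OF emY, of "snd p"] by (simp add: prod_act_def)
next
  fix n u v p assume "EMtuple n u" "EMtuple n v" "p \<in> box X aX Y aY n"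
  then show "prod_act aX aY n (\<lambda>k. u k \<circ> v k) p = prod_act aX aY n u (prod_act aX aY n v p)"
    using mem_box[of p] em_act_comp[OF emX, of n u v "fst p"] em_act_comp[OF emY, of n u v "snd p"]
    by (simp add: prod_act_def)
next
  fix m n f u p assume "simp_op m n f" "EMtuple n u" "p \<in> box X aX Y aY n"
  then show "prod_sm smX smY m n f (prod_act aX aY n u p) = prod_act aX aY m (\<lambda>j. u (f j)) (prod_sm smX smY m n f p)"
    using mem_box[of p] em_compat[OF emX, of m n f u "fst p"] em_compat[OF emY, of m n f u "snd p"]
    by (simp add: prod_act_def prod_sm_def)
qed

lemma mild_box: "mild (box X aX Y aY) (prod_act aX aY)"
  unfolding mild_def
proof (intro allI ballI impI)
  fix n p k assume p: "p \<in> box X aX Y aY n" and k: "k \<le> n"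
  obtain A B where AB: "A \<inter> B = {}" "coinfinite (A \<union> B)"
      "supported aX n (fst p) k A" "supported aY n (snd p) k B"
    using p k by (cases p) (auto simp: box_def)
  have "supported (prod_act aX aY) n p k (A \<union> B)"
    using AB(3,4) sup_mono sup_prod by (metis sup_ge1 sup_ge2)
  then show "\<exists>A. coinfinite A \<and> supported (prod_act aX aY) n p k A" using AB(2) by blast
qed

lemma em_term: "em_sset term_X term_sm term_act"
  unfolding em_sset_def term_X_def term_sm_def term_act_def by simp

lemma coinf_empty: "coinfinite {}"
  by (simp add: coinfinite_def)

lemma mild_term: "mild term_X term_act"
  unfolding mild_def supported_def term_act_def using coinf_empty by auto

lemma assoc_fwd:
  assumes emX: "em_sset X smX aX" and emY: "em_sset Y smY aY" and emZ: "em_sset Z smZ aZ"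
    and p: "((x, y), z) \<in> box (box X aX Y aY) (prod_act aX aY) Z aZ n"
  shows "(x, (y, z)) \<in> box X aX (box Y aY Z aZ) (prod_act aY aZ) n"
proof -
  have xy: "(x, y) \<in> box X aX Y aY n" and z: "z \<in> Z n" using p by (auto simp: box_def)
  have x: "x \<in> X n" and y: "y \<in> Y n" using xy by (auto simp: box_def)
  have H1: "\<forall>k\<le>n. \<exists>A B. A \<inter> B = {} \<and> coinfinite (A \<union> B) \<and>
        supported aX n x k A \<and> supported aY n y k B" using xy by (simp add: box_def)
  have H2: "\<forall>k\<le>n. \<exists>D C. D \<inter> C = {} \<and> coinfinite (D \<union> C) \<and>
        supported aX n x k D \<and> supported aY n y k D \<and> supported aZ n z k C"
    using p by (simp add: box_def sup_prod)
  have yz: "(y, z) \<in> box Y aY Z aZ n"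
    using H2 y z unfolding box_def by blast
  have "\<forall>k\<le>n. \<exists>A E. A \<inter> E = {} \<and> coinfinite (A \<union> E) \<and>
        supported aX n x k A \<and> supported (prod_act aY aZ) n (y, z) k E"
  proof (intro allI impI)
    fix k assume k: "k \<le> n"
    obtain A B where AB: "A \<inter> B = {}" "coinfinite (A \<union> B)"
      "supported aX n x k A" "supported aY n y k B" using H1 k by blast
    obtain D C where DC: "D \<inter> C = {}" "coinfinite (D \<union> C)"
      "supported aX n x k D" "supported aY n y k D" "supported aZ n z k C" using H2 k by blast
    have c: "coinfinite A" "coinfinite B" "coinfinite D" "coinfinite C"
      using AB(2) DC(2) coinf_mono by blast+
    have sx: "supported aX n x k (A \<inter> D)" using sup_Int[OF emX x AB(3) DC(3) c(1) c(3)] .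
    have sy: "supported aY n y k (B \<inter> D)" using sup_Int[OF emY y AB(4) DC(4) c(2) c(3)] .
    have syz: "supported (prod_act aY aZ) n (y, z) k ((B \<inter> D) \<union> C)"
      using sup_mono[OF sy] sup_mono[OF DC(5)] by (simp add: sup_prod)
    have "A \<inter> D \<inter> ((B \<inter> D) \<union> C) = {}" using AB(1) DC(1) by blast
    moreover have "coinfinite ((A \<inter> D) \<union> ((B \<inter> D) \<union> C))"
      by (rule coinf_mono[OF DC(2)]) blast
    ultimately show "\<exists>A E. A \<inter> E = {} \<and> coinfinite (A \<union> E) \<and>
        supported aX n x k A \<and> supported (prod_act aY aZ) n (y, z) k E"
      using sx syz by blast
  qed
  then show ?thesis using x yz by (simp add: box_def)
qed

lemma assoc_bwd:
  assumes emX: "em_sset X smX aX" and emY: "em_sset Y smY aY" and emZ: "em_sset Z smZ aZ"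
    and p: "(x, (y, z)) \<in> box X aX (box Y aY Z aZ) (prod_act aY aZ) n"
  shows "((x, y), z) \<in> box (box X aX Y aY) (prod_act aX aY) Z aZ n"
proof -
  have yz: "(y, z) \<in> box Y aY Z aZ n" and x: "x \<in> X n" using p by (auto simp: box_def)
  have y: "y \<in> Y n" and z: "z \<in> Z n" using yz by (auto simp: box_def)
  have H1: "\<forall>k\<le>n. \<exists>B C. B \<inter> C = {} \<and> coinfinite (B \<union> C) \<and>
        supported aY n y k B \<and> supported aZ n z k C" using yz by (simp add: box_def)
  have H2: "\<forall>k\<le>n. \<exists>A E. A \<inter> E = {} \<and> coinfinite (A \<union> E) \<and>
        supported aX n x k A \<and> supported aY n y k E \<and> supported aZ n z k E"
    using p by (simp add: box_def sup_prod)
  have xy: "(x, y) \<in> box X aX Y aY n"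
    using H2 x y unfolding box_def by blast
  have "\<forall>k\<le>n. \<exists>D C. D \<inter> C = {} \<and> coinfinite (D \<union> C) \<and>
        supported (prod_act aX aY) n (x, y) k D \<and> supported aZ n z k C"
  proof (intro allI impI)
    fix k assume k: "k \<le> n"
    obtain B C where BC: "B \<inter> C = {}" "coinfinite (B \<union> C)"
      "supported aY n y k B" "supported aZ n z k C" using H1 k by blast
    obtain A E where AE: "A \<inter> E = {}" "coinfinite (A \<union> E)"
      "supported aX n x k A" "supported aY n y k E" "supported aZ n z k E" using H2 k by blast
    have c: "coinfinite B" "coinfinite C" "coinfinite E"
      using BC(2) AE(2) coinf_mono by blast+
    have sy: "supported aY n y k (B \<inter> E)" using sup_Int[OF emY y BC(3) AE(4) c(1) c(3)] .
    have sz: "supported aZ n z k (C \<inter> E)" using sup_Int[OF emZ z BC(4) AE(5) c(2) c(3)] .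
    have sxy: "supported (prod_act aX aY) n (x, y) k (A \<union> (B \<inter> E))"
      using sup_mono[OF AE(3)] sup_mono[OF sy] by (simp add: sup_prod)
    have "(A \<union> (B \<inter> E)) \<inter> (C \<inter> E) = {}" using AE(1) BC(1) by blast
    moreover have "coinfinite ((A \<union> (B \<inter> E)) \<union> (C \<inter> E))"
      by (rule coinf_mono[OF AE(2)]) blast
    ultimately show "\<exists>D C. D \<inter> C = {} \<and> coinfinite (D \<union> C) \<and>
        supported (prod_act aX aY) n (x, y) k D \<and> supported aZ n z k C"
      using sxy sz by blast
  qed
  then show ?thesis using xy z by (simp add: box_def)
qed

lemma swap_box: "(x, y) \<in> box X aX Y aY n \<Longrightarrow> (y, x) \<in> box Y aY X aX n"
  unfolding box_def by (auto simp: Int_commute Un_commute) (metis Int_commute Un_commute)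

lemma sup_term: "supported term_act n () k A"
  by (simp add: supported_def term_act_def)

lemma unit_left:
  assumes m: "mild X aX" and x: "x \<in> X n"
  shows "((), x) \<in> box term_X term_act X aX n"
proof -
  have "\<forall>k\<le>n. \<exists>A B. A \<inter> B = {} \<and> coinfinite (A \<union> B) \<and>
        supported term_act n () k A \<and> supported aX n x k B"
  proof (intro allI impI)
    fix k assume "k \<le> n"
    then obtain B where "coinfinite B" "supported aX n x k B" using m x unfolding mild_def by blast
    then show "\<exists>A B. A \<inter> B = {} \<and> coinfinite (A \<union> B) \<and>
        supported term_act n () k A \<and> supported aX n x k B"
      using sup_term[of n k "{}"] by (intro exI[of _ "{}"] exI[of _ B]) simp
  qed
  then show ?thesis using x by (simp add: box_def term_X_def)
qed

lemma unit_right: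
  assumes m: "mild X aX" and x: "x \<in> X n"
  shows "(x, ()) \<in> box X aX term_X term_act n"
proof -
  have "\<forall>k\<le>n. \<exists>A B. A \<inter> B = {} \<and> coinfinite (A \<union> B) \<and>
        supported aX n x k A \<and> supported term_act n () k B"
  proof (intro allI impI)
    fix k assume "k \<le> n"
    then obtain A where "coinfinite A" "supported aX n x k A" using m x unfolding mild_def by blast
    then show "\<exists>A B. A \<inter> B = {} \<and> coinfinite (A \<union> B) \<and>
        supported aX n x k A \<and> supported term_act n () k B"
      using sup_term[of n k "{}"] by (intro exI[of _ A] exI[of _ "{}"]) simp
  qed
  then show ?thesis using x by (simp add: box_def term_X_def)
qed

theorem proposition2p18:
  fixes X :: "nat \<Rightarrow> 'a set" and smX :: "nat \<Rightarrow> nat \<Rightarrow> (nat \<Rightarrow> nat) \<Rightarrow> 'a \<Rightarrow> 'a"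
    and actX :: "nat \<Rightarrow> (nat \<Rightarrow> nat \<Rightarrow> nat) \<Rightarrow> 'a \<Rightarrow> 'a"
    and Y :: "nat \<Rightarrow> 'b set" and smY :: "nat \<Rightarrow> nat \<Rightarrow> (nat \<Rightarrow> nat) \<Rightarrow> 'b \<Rightarrow> 'b"
    and actY :: "nat \<Rightarrow> (nat \<Rightarrow> nat \<Rightarrow> nat) \<Rightarrow> 'b \<Rightarrow> 'b"
    and Z :: "nat \<Rightarrow> 'c set" and smZ :: "nat \<Rightarrow> nat \<Rightarrow> (nat \<Rightarrow> nat) \<Rightarrow> 'c \<Rightarrow> 'c"
    and actZ :: "nat \<Rightarrow> (nat \<Rightarrow> nat \<Rightarrow> nat) \<Rightarrow> 'c \<Rightarrow> 'c"
  assumes "em_sset X smX actX" and "mild X actX"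
    and "em_sset Y smY actY" and "mild Y actY"
    and "em_sset Z smZ actZ" and "mild Z actZ"
  shows
    \<comment> \<open>the box product is a mild E M-simplicial subset of the product (well-definedness)\<close>
    "em_sset (box X actX Y actY) (prod_sm smX smY) (prod_act actX actY)
     \<and> mild (box X actX Y actY) (prod_act actX actY)
     \<comment> \<open>the terminal object is a mild E M-simplicial set (the unit)\<close>
     \<and> em_sset term_X term_sm term_act \<and> mild term_X term_act
     \<comment> \<open>associator restricts to an isomorphism\<close>
     \<and> (\<forall>n. bij_betw (\<lambda>((x, y), z). (x, (y, z)))
             (box (box X actX Y actY) (prod_act actX actY) Z actZ n)
             (box X actX (box Y actY Z actZ) (prod_act actY actZ) n))
     \<comment> \<open>symmetry restricts to an isomorphism\<close>
     \<and> (\<forall>n. bij_betw (\<lambda>(x, y). (y, x)) (box X actX Y actY n) (box Y actY X actX n))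
     \<comment> \<open>left and right unitors restrict to isomorphisms\<close>
     \<and> (\<forall>n. bij_betw snd (box term_X term_act X actX n) (X n))
     \<and> (\<forall>n. bij_betw fst (box X actX term_X term_act n) (X n))"
proof (intro conjI allI)
  show "em_sset (box X actX Y actY) (prod_sm smX smY) (prod_act actX actY)"
    by (rule em_box[OF assms(1) assms(3)])
  show "mild (box X actX Y actY) (prod_act actX actY)" by (rule mild_box)
  show "em_sset term_X term_sm term_act" by (rule em_term)
  show "mild term_X term_act" by (rule mild_term)
next
  fix n
  let ?L = "box (box X actX Y actY) (prod_act actX actY) Z actZ n"
  let ?R = "box X actX (box Y actY Z actZ) (prod_act actY actZ) n"
  let ?f = "\<lambda>((x::'a, y::'b), z::'c). (x, (y, z))"
  have inj: "inj_on ?f ?L" by (auto simp: inj_on_def)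
  have sub: "?f ` ?L \<subseteq> ?R" using assoc_fwd[OF assms(1,3,5)] by auto
  have sup: "?R \<subseteq> ?f ` ?L"
  proof
    fix q assume q: "q \<in> ?R"
    obtain x y z where qe: "q = (x, (y, z))" by (cases q) auto
    then have "((x, y), z) \<in> ?L" using assoc_bwd[OF assms(1,3,5)] q by blast
    then show "q \<in> ?f ` ?L" using qe by (auto intro: rev_image_eqI)
  qed
  show "bij_betw ?f ?L ?R" unfolding bij_betw_def using inj sub sup by blast
next
  fix n
  let ?f = "\<lambda>(x::'a, y::'b). (y, x)"
  have inj: "inj_on ?f (box X actX Y actY n)" by (auto simp: inj_on_def)
  have sub: "?f ` (box X actX Y actY n) \<subseteq> box Y actY X actX n" using swap_box by auto
  have sup: "box Y actY X actX n \<subseteq> ?f ` (box X actX Y actY n)"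
  proof
    fix q assume q: "q \<in> box Y actY X actX n"
    obtain y x where qe: "q = (y, x)" by (cases q) auto
    then have "(x, y) \<in> box X actX Y actY n" using swap_box[of y x Y actY X actX n] q by simp
    then show "q \<in> ?f ` (box X actX Y actY n)" using qe by (auto intro: rev_image_eqI)
  qed
  show "bij_betw ?f (box X actX Y actY n) (box Y actY X actX n)"
    unfolding bij_betw_def using inj sub sup by blast
next
  fix n
  have inj: "inj_on snd (box term_X term_act X actX n)" by (auto simp: inj_on_def prod_eq_iff)
  have sub: "snd ` (box term_X term_act X actX n) \<subseteq> X n" using mem_box by blast
  have sup: "X n \<subseteq> snd ` (box term_X term_act X actX n)"
  proof
    fix x assume "x \<in> X n"
    then have "((), x) \<in> box term_X term_act X actX n" by (rule unit_left[OF assms(2)])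
    then show "x \<in> snd ` (box term_X term_act X actX n)" by (auto intro: rev_image_eqI)
  qed
  show "bij_betw snd (box term_X term_act X actX n) (X n)"
    unfolding bij_betw_def using inj sub sup by blast
next
  fix n
  have inj: "inj_on fst (box X actX term_X term_act n)" by (auto simp: inj_on_def prod_eq_iff)
  have sub: "fst ` (box X actX term_X term_act n) \<subseteq> X n" using mem_box by blast
  have sup: "X n \<subseteq> fst ` (box X actX term_X term_act n)"
  proof
    fix x assume "x \<in> X n"
    then have "(x, ()) \<in> box X actX term_X term_act n" by (rule unit_right[OF assms(2)])
    then show "x \<in> fst ` (box X actX term_X term_act n)" by (auto intro: rev_image_eqI)
  qed
  show "bij_betw fst (box X actX term_X term_act n) (X n)"
    unfolding bij_betw_def using inj sub sup by blast
qed

end
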